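(* Let $R$ be a ring and let $m$ and $n$ be positive integers. (1) A proper ideal $I$ of $R$ is weakly $n$-absorbing if and only if for every integer $m>n$ and all $x_1,\dots,x_m\in R$ with $0\neq x_1\cdots x_m\in I$, there are $n$ of the $x_i$'s whose product is in $I$. (2) If $I$ is a weakly $n$-absorbing ideal of $R$, then $I$ is a weakly $m$-absorbing ideal of $R$ for all $m\geq n$. (3) If $k\geq1$ and, for each $1\leq i\leq k$, $I_i$ is a weakly $n_i$-absorbing ideal of $R$ (with $n_i$ positive integers), then $I_1\cap\cdots\cap I_k$ is a weakly $n$-absorbing ideal of $R$ for $n=n_1+\cdots+n_k$. In particular, if $P_1,\dots,P_n$ are weakly prime ideals of $R$, then $P_1\cap\cdots\cap P_n$ is a weakly $n$-absorbing ideal of $R$. (4) If $P_1,\dots,P_n$ are weakly prime ideals of $R$ that are pairwise comaximal, then $P_1\cdots P_n$ is a weakly $n$-absorbing ideal of $R$.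
   Context: All rings are commutative with $1\neq0$. A proper ideal $I$ of $R$ is weakly $n$-absorbing if whenever $0\neq a_1\cdots a_{n+1}\in I$ with $a_1,\dots,a_{n+1}\in R$, there are $n$ of the $a_i$'s whose product is in $I$. A proper ideal $P$ is weakly prime if whenever $a,b\in R$ and $0\neq ab\in P$, then $a\in P$ or $b\in P$. *)

theory Defs
  imports Main
begin

definition is_ideal :: "'a::comm_ring_1 set \<Rightarrow> bool" where
  "is_ideal I \<longleftrightarrow> 0 \<in> I \<and> (\<forall>a\<in>I. \<forall>b\<in>I. a + b \<in> I) \<and> (\<forall>a\<in>I. - a \<in> I)
     \<and> (\<forall>r a. a \<in> I \<longrightarrow> r * a \<in> I)"

definition proper_ideal :: "'a::comm_ring_1 set \<Rightarrow> bool" where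
  "proper_ideal I \<longleftrightarrow> is_ideal I \<and> I \<noteq> UNIV"

definition weakly_n_absorbing :: "nat \<Rightarrow> 'a::comm_ring_1 set \<Rightarrow> bool" where
  "weakly_n_absorbing n I \<longleftrightarrow> proper_ideal I \<and>
     (\<forall>a :: nat \<Rightarrow> 'a. (\<Prod>i<Suc n. a i) \<noteq> 0 \<and> (\<Prod>i<Suc n. a i) \<in> I \<longrightarrow>
        (\<exists>J \<subseteq> {..<Suc n}. card J = n \<and> (\<Prod>i\<in>J. a i) \<in> I))"

definition weakly_prime :: "'a::comm_ring_1 set \<Rightarrow> bool" where
  "weakly_prime P \<longleftrightarrow> proper_ideal P \<and>
     (\<forall>a b. a * b \<noteq> 0 \<and> a * b \<in> P \<longrightarrow> a \<in> P \<or> b \<in> P)"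

definition ideal_gen :: "'a::comm_ring_1 set \<Rightarrow> 'a set" where
  "ideal_gen S = \<Inter>{J. is_ideal J \<and> S \<subseteq> J}"

definition ideal_sum :: "'a::comm_ring_1 set \<Rightarrow> 'a set \<Rightarrow> 'a set" where
  "ideal_sum A B = {a + b | a b. a \<in> A \<and> b \<in> B}"

definition ideal_prod :: "nat \<Rightarrow> (nat \<Rightarrow> 'a::comm_ring_1 set) \<Rightarrow> 'a set" where
  "ideal_prod n P = ideal_gen {\<Prod>i<n. p i | p. \<forall>i<n. p i \<in> P i}"

end

theory Submission
  imports Defs
begin


definition absK :: "nat \<Rightarrow> 'a::comm_ring_1 set \<Rightarrow> bool" where
  "absK n I \<longleftrightarrow> (\<forall>(K::nat set) x. finite K \<and> card K = Suc n \<and> (\<Prod>i\<in>K. x i) \<noteq> 0 \<and> (\<Prod>i\<in>K. x i) \<in> I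
     \<longrightarrow> (\<exists>J \<subseteq> K. card J = n \<and> (\<Prod>i\<in>J. x i) \<in> I))"

lemma prod_super_in:
  fixes x :: "nat \<Rightarrow> 'a::comm_ring_1"
  assumes "is_ideal I" "finite B" "A \<subseteq> B" "(\<Prod>i\<in>A. x i) \<in> I"
  shows "(\<Prod>i\<in>B. x i) \<in> I"
proof -
  have "(\<Prod>i\<in>B. x i) = (\<Prod>i\<in>B-A. x i) * (\<Prod>i\<in>A. x i)"
    using prod.subset_diff[OF assms(3,2)] by simp
  moreover have "\<forall>r a. a \<in> I \<longrightarrow> r * a \<in> I" using assms(1) unfolding is_ideal_def by blast
  ultimately show ?thesis using assms(4) by simp
qed

lemma prod_sub_nz:
  fixes x :: "nat \<Rightarrow> 'a::comm_ring_1"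
  assumes "finite B" "A \<subseteq> B" "(\<Prod>i\<in>B. x i) \<noteq> 0"
  shows "(\<Prod>i\<in>A. x i) \<noteq> 0"
  using prod.subset_diff[OF assms(2,1), of x] assms(3) by auto

lemma absK_of:
  fixes I :: "'a::comm_ring_1 set"
  assumes "weakly_n_absorbing n I" shows "absK n I"
  unfolding absK_def
proof (intro allI impI)
  fix K :: "nat set" and x :: "nat \<Rightarrow> 'a"
  assume H: "finite K \<and> card K = Suc n \<and> (\<Prod>i\<in>K. x i) \<noteq> 0 \<and> (\<Prod>i\<in>K. x i) \<in> I"
  obtain h where h: "bij_betw h {0..<card K} K" using ex_bij_betw_nat_finite H by blast
  have hb: "bij_betw h {..<Suc n} K" using h H by (simp add: atLeast0LessThan)
  have eq: "(\<Prod>i<Suc n. x (h i)) = (\<Prod>i\<in>K. x i)"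
    using prod.reindex_bij_betw[OF hb, of x] by simp
  have W: "\<forall>a::nat\<Rightarrow>'a. (\<Prod>i<Suc n. a i) \<noteq> 0 \<and> (\<Prod>i<Suc n. a i) \<in> I \<longrightarrow> (\<exists>J\<subseteq>{..<Suc n}. card J = n \<and> (\<Prod>i\<in>J. a i) \<in> I)"
    using assms unfolding weakly_n_absorbing_def by blast
  have "\<exists>J\<subseteq>{..<Suc n}. card J = n \<and> (\<Prod>i\<in>J. x (h i)) \<in> I"
    using spec[OF W, of "\<lambda>i. x (h i)"] H eq by simp
  then obtain J' where J': "J' \<subseteq> {..<Suc n}" "card J' = n" "(\<Prod>i\<in>J'. x (h i)) \<in> I" by blast
  have inj: "inj_on h J'" using hb J'(1) unfolding bij_betw_def by (meson inj_on_subset)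
  show "\<exists>J \<subseteq> K. card J = n \<and> (\<Prod>i\<in>J. x i) \<in> I"
  proof (intro exI conjI)
    show "h ` J' \<subseteq> K" using hb J'(1) unfolding bij_betw_def by auto
    show "card (h ` J') = n" using card_image[OF inj] J' by simp
    show "(\<Prod>i\<in>h ` J'. x i) \<in> I" using prod.reindex[OF inj, of x] J'(3) by simp
  qed
qed

lemma absK_gen0:
  fixes I :: "'a::comm_ring_1 set"
  assumes A: "absK n I"
  shows "\<forall>(K::nat set) (x::nat\<Rightarrow>'a). finite K \<longrightarrow> card K = N \<longrightarrow> N > n \<longrightarrow> (\<Prod>i\<in>K. x i) \<noteq> 0 \<longrightarrow> (\<Prod>i\<in>K. x i) \<in> I
     \<longrightarrow> (\<exists>J \<subseteq> K. card J = n \<and> (\<Prod>i\<in>J. x i) \<in> I)"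
proof (induction N rule: less_induct)
  case (less N)
  show ?case
  proof (intro allI impI)
  fix K :: "nat set" and x :: "nat \<Rightarrow> 'a"
  assume p1: "finite K" and p2: "card K = N" and p3: "N > n" and p4: "(\<Prod>i\<in>K. x i) \<noteq> 0" and p5: "(\<Prod>i\<in>K. x i) \<in> I"
  show "\<exists>J \<subseteq> K. card J = n \<and> (\<Prod>i\<in>J. x i) \<in> I"
  proof (cases "card K = Suc n")
    case True
    then show ?thesis using A p1 p4 p5 unfolding absK_def by blast
  next
    case False
    then have gt: "card K > Suc n" using p2 p3 by simp
    then have "K \<noteq> {}" by (metis card.empty not_less_zero)
    then obtain a where a: "a \<in> K" by blast
    have "card (K - {a}) > 0" using gt a p1 by simp
    then have "K - {a} \<noteq> {}" by (metis card.empty less_irrefl)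
    then obtain b where b: "b \<in> K - {a}" by blast
    define y where "y = x(a := x a * x b)"
    define K' where "K' = K - {b}"
    have fK': "finite K'" using p1 K'_def by simp
    have cK': "card K' = card K - 1" using b p1 K'_def by simp
    have aK': "a \<in> K'" using a b K'_def by auto
    have "(\<Prod>i\<in>K'. y i) = y a * (\<Prod>i\<in>K'-{a}. y i)" using prod.remove[OF fK' aK', of y] by simp
    also have "(\<Prod>i\<in>K'-{a}. y i) = (\<Prod>i\<in>K'-{a}. x i)" by (rule prod.cong) (auto simp: y_def)
    also have "y a * (\<Prod>i\<in>K'-{a}. x i) = x b * (x a * (\<Prod>i\<in>K'-{a}. x i))" by (simp add: y_def ac_simps)
    also have "x a * (\<Prod>i\<in>K'-{a}. x i) = (\<Prod>i\<in>K'. x i)" using prod.remove[OF fK' aK', of x] by simp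
    also have "x b * (\<Prod>i\<in>K'. x i) = (\<Prod>i\<in>K. x i)"
      using prod.remove[OF p1, of b x] b K'_def by simp
    finally have peq: "(\<Prod>i\<in>K'. y i) = (\<Prod>i\<in>K. x i)" .
    have lt: "card K' < N" using cK' gt p2 by simp
    have nlt: "n < card K'" using cK' gt by simp
    have "\<exists>J \<subseteq> K'. card J = n \<and> (\<Prod>i\<in>J. y i) \<in> I"
      using less[OF lt] fK' nlt peq p4 p5 by simp
    then obtain J where J: "J \<subseteq> K'" "card J = n" "(\<Prod>i\<in>J. y i) \<in> I" by blast
    show ?thesis
    proof (cases "a \<in> J")
      case False
      have "(\<Prod>i\<in>J. y i) = (\<Prod>i\<in>J. x i)" by (rule prod.cong) (use False y_def in auto)
      then show ?thesis using J K'_def by auto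
    next
      case True
      have fJ: "finite J" using J fK' finite_subset by blast
      have bJ: "b \<notin> J" using J K'_def by auto
      define L where "L = insert b J"
      have "(\<Prod>i\<in>J. y i) = y a * (\<Prod>i\<in>J-{a}. y i)" using prod.remove[OF fJ True, of y] by simp
      also have "(\<Prod>i\<in>J-{a}. y i) = (\<Prod>i\<in>J-{a}. x i)" by (rule prod.cong) (auto simp: y_def)
      also have "y a * (\<Prod>i\<in>J-{a}. x i) = x b * (x a * (\<Prod>i\<in>J-{a}. x i))" by (simp add: y_def ac_simps)
      also have "x a * (\<Prod>i\<in>J-{a}. x i) = (\<Prod>i\<in>J. x i)" using prod.remove[OF fJ True, of x] by simp
      also have "x b * (\<Prod>i\<in>J. x i) = (\<Prod>i\<in>L. x i)" using fJ bJ L_def by simp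
      finally have Leq: "(\<Prod>i\<in>J. y i) = (\<Prod>i\<in>L. x i)" .
      have LK: "L \<subseteq> K" using J b K'_def L_def by auto
      have cL: "card L = Suc n" using fJ bJ J L_def by simp
      have nz: "(\<Prod>i\<in>L. x i) \<noteq> 0" using prod_sub_nz[OF p1 LK, of x] p4 by simp
      have fL: "finite L" using fJ L_def by simp
      have "\<exists>J2 \<subseteq> L. card J2 = n \<and> (\<Prod>i\<in>J2. x i) \<in> I"
        using A fL cL nz J(3) Leq unfolding absK_def by simp
      then show ?thesis using LK by blast
    qed
  qed
  qed
qed

lemma absK_gen:
  fixes I :: "'a::comm_ring_1 set" and K :: "nat set"
  assumes "absK n I" "finite K" "card K > n" "(\<Prod>i\<in>K. x i) \<noteq> 0" "(\<Prod>i\<in>K. x i) \<in> I"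
  shows "\<exists>J \<subseteq> K. card J = n \<and> (\<Prod>i\<in>J. x i) \<in> I"
  using absK_gen0[OF assms(1), of "card K", rule_format, OF assms(2) refl assms(3-5)] .

lemma extend_card:
  assumes "finite K" "J \<subseteq> K" "card J \<le> m" "m \<le> card K"
  shows "\<exists>J'. J \<subseteq> J' \<and> J' \<subseteq> K \<and> card J' = m"
proof -
  have fJ: "finite J" using assms finite_subset by blast
  have "m - card J \<le> card (K - J)" using assms fJ card_Diff_subset by (simp add: card_Diff_subset)
  then obtain T where T: "T \<subseteq> K - J" "card T = m - card J" "finite T" by (rule obtain_subset_with_card_n)
  have "card (J \<union> T) = card J + card T" using T fJ by (subst card_Un_disjoint) auto
  then show ?thesis using T assms by (intro exI[of _ "J \<union> T"]) auto
qed



lemma part1: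
  fixes I :: "'a::comm_ring_1 set"
  assumes "proper_ideal I"
  shows "weakly_n_absorbing n I \<longleftrightarrow>
         (\<forall>m > n. \<forall>x :: nat \<Rightarrow> 'a. (\<Prod>i<m. x i) \<noteq> 0 \<and> (\<Prod>i<m. x i) \<in> I \<longrightarrow>
             (\<exists>J \<subseteq> {..<m}. card J = n \<and> (\<Prod>i\<in>J. x i) \<in> I))"
proof
  assume W: "weakly_n_absorbing n I"
  show "\<forall>m > n. \<forall>x :: nat \<Rightarrow> 'a. (\<Prod>i<m. x i) \<noteq> 0 \<and> (\<Prod>i<m. x i) \<in> I \<longrightarrow>
             (\<exists>J \<subseteq> {..<m}. card J = n \<and> (\<Prod>i\<in>J. x i) \<in> I)"
  proof (intro allI impI)
    fix m and x :: "nat \<Rightarrow> 'a"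
    assume "n < m" "(\<Prod>i<m. x i) \<noteq> 0 \<and> (\<Prod>i<m. x i) \<in> I"
    then show "\<exists>J \<subseteq> {..<m}. card J = n \<and> (\<Prod>i\<in>J. x i) \<in> I"
      using absK_gen[OF absK_of[OF W], of "{..<m}" x] by simp
  qed
next
  assume H: "\<forall>m > n. \<forall>x :: nat \<Rightarrow> 'a. (\<Prod>i<m. x i) \<noteq> 0 \<and> (\<Prod>i<m. x i) \<in> I \<longrightarrow>
             (\<exists>J \<subseteq> {..<m}. card J = n \<and> (\<Prod>i\<in>J. x i) \<in> I)"
  then show "weakly_n_absorbing n I" using assms unfolding weakly_n_absorbing_def
    by (meson lessI)
qed

lemma part2:
  fixes I :: "'a::comm_ring_1 set"
  assumes W: "weakly_n_absorbing n I" and mn: "m \<ge> n"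
  shows "weakly_n_absorbing m I"
  unfolding weakly_n_absorbing_def
proof (intro conjI allI impI)
  show "proper_ideal I" using W weakly_n_absorbing_def by blast
  then have id: "is_ideal I" using proper_ideal_def by blast
  fix x :: "nat \<Rightarrow> 'a"
  assume H: "(\<Prod>i<Suc m. x i) \<noteq> 0 \<and> (\<Prod>i<Suc m. x i) \<in> I"
  obtain J where J: "J \<subseteq> {..<Suc m}" "card J = n" "(\<Prod>i\<in>J. x i) \<in> I"
    using absK_gen[OF absK_of[OF W], of "{..<Suc m}" x] H mn by auto
  obtain J' where J': "J \<subseteq> J'" "J' \<subseteq> {..<Suc m}" "card J' = m"
    using extend_card[of "{..<Suc m}" J m] J mn by auto
  have "(\<Prod>i\<in>J'. x i) \<in> I"
    using prod_super_in[OF id _ J'(1) J(3)] J'(2) finite_subset by blast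
  then show "\<exists>J\<subseteq>{..<Suc m}. card J = m \<and> (\<Prod>i\<in>J. x i) \<in> I" using J' by blast
qed

lemma is_ideal_Inter:
  fixes I :: "nat \<Rightarrow> 'a::comm_ring_1 set"
  assumes "\<forall>i\<in>A. is_ideal (I i)"
  shows "is_ideal (\<Inter>i\<in>A. I i)"
  using assms unfolding is_ideal_def by auto

lemma part3:
  fixes I :: "nat \<Rightarrow> 'a::comm_ring_1 set"
  assumes k: "k \<ge> 1" and H: "\<forall>i<k. ns i > 0 \<and> weakly_n_absorbing (ns i) (I i)"
  shows "weakly_n_absorbing (\<Sum>i<k. ns i) (\<Inter>i<k. I i)"
  unfolding weakly_n_absorbing_def
proof (intro conjI allI impI)
  define n where "n = (\<Sum>i<k. ns i)"
  have ids: "\<forall>i\<in>{..<k}. is_ideal (I i)" using H unfolding weakly_n_absorbing_def proper_ideal_def by blast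
  have id: "is_ideal (\<Inter>i<k. I i)" using is_ideal_Inter[OF ids] .
  have "I 0 \<noteq> UNIV" using H k unfolding weakly_n_absorbing_def proper_ideal_def by auto
  then have "(\<Inter>i<k. I i) \<noteq> UNIV" using k by auto
  then show "proper_ideal (\<Inter>i<k. I i)" using id proper_ideal_def by blast
  fix x :: "nat \<Rightarrow> 'a"
  assume X: "(\<Prod>i<Suc (\<Sum>i<k. ns i). x i) \<noteq> 0 \<and> (\<Prod>i<Suc (\<Sum>i<k. ns i). x i) \<in> (\<Inter>i<k. I i)"
  have "\<forall>i<k. \<exists>J. J \<subseteq> {..<Suc n} \<and> card J = ns i \<and> (\<Prod>j\<in>J. x j) \<in> I i"
  proof (intro allI impI)
    fix i assume i: "i < k"
    have le: "ns i \<le> n" unfolding n_def using i by (intro member_le_sum) auto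
    show "\<exists>J. J \<subseteq> {..<Suc n} \<and> card J = ns i \<and> (\<Prod>j\<in>J. x j) \<in> I i"
      using absK_gen[OF absK_of[of "ns i" "I i"], of "{..<Suc n}" x] H i X le n_def by auto
  qed
  then obtain Jf where Jf: "\<forall>i<k. Jf i \<subseteq> {..<Suc n} \<and> card (Jf i) = ns i \<and> (\<Prod>j\<in>Jf i. x j) \<in> I i"
    by metis
  define U where "U = (\<Union>i<k. Jf i)"
  have "card U \<le> (\<Sum>i<k. card (Jf i))" unfolding U_def by (rule card_UN_le) simp
  also have "\<dots> = n" unfolding n_def using Jf by (intro sum.cong) auto
  finally have cU: "card U \<le> n" .
  have UK: "U \<subseteq> {..<Suc n}" using Jf U_def by auto
  obtain J' where J': "U \<subseteq> J'" "J' \<subseteq> {..<Suc n}" "card J' = n"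
    using extend_card[of "{..<Suc n}" U n] UK cU by auto
  have "\<forall>i<k. (\<Prod>j\<in>J'. x j) \<in> I i"
  proof (intro allI impI)
    fix i assume i: "i < k"
    have sub: "Jf i \<subseteq> J'" using J'(1) U_def i by auto
    have idi: "is_ideal (I i)" using ids i by simp
    have fJ': "finite J'" using J'(2) by (meson finite_lessThan finite_subset)
    have "(\<Prod>j\<in>Jf i. x j) \<in> I i" using Jf i by simp
    then show "(\<Prod>j\<in>J'. x j) \<in> I i" using prod_super_in[OF idi fJ' sub] by simp
  qed
  then have "(\<Prod>j\<in>J'. x j) \<in> (\<Inter>i<k. I i)" by simp
  then show "\<exists>J\<subseteq>{..<Suc (\<Sum>i<k. ns i)}. card J = (\<Sum>i<k. ns i) \<and> (\<Prod>i\<in>J. x i) \<in> (\<Inter>i<k. I i)"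
    using J' unfolding n_def by blast
qed

lemma wp_1:
  fixes P :: "'a::comm_ring_1 set"
  assumes "weakly_prime P" shows "weakly_n_absorbing 1 P"
  unfolding weakly_n_absorbing_def
proof (intro conjI allI impI)
  show "proper_ideal P" using assms weakly_prime_def by blast
  fix x :: "nat \<Rightarrow> 'a"
  assume H: "(\<Prod>i<Suc 1. x i) \<noteq> 0 \<and> (\<Prod>i<Suc 1. x i) \<in> P"
  have "(\<Prod>i<Suc 1. x i) = x 0 * x 1" by (simp add: numeral_2_eq_2)
  then have "x 0 \<in> P \<or> x 1 \<in> P" using H assms unfolding weakly_prime_def by metis
  then show "\<exists>J\<subseteq>{..<Suc 1}. card J = 1 \<and> (\<Prod>i\<in>J. x i) \<in> P"
  proof
    assume "x 0 \<in> P" then show ?thesis by (intro exI[of _ "{0}"]) auto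
  next
    assume "x 1 \<in> P" then show ?thesis by (intro exI[of _ "{1}"]) auto
  qed
qed

lemma part4:
  fixes P :: "nat \<Rightarrow> 'a::comm_ring_1 set"
  assumes "n > 0" "\<forall>i<n. weakly_prime (P i)"
  shows "weakly_n_absorbing n (\<Inter>i<n. P i)"
  using part3[of n "\<lambda>_. 1" P] assms wp_1 by auto



lemma is_ideal_gen: "is_ideal (ideal_gen (S::'a::comm_ring_1 set))"
  unfolding ideal_gen_def is_ideal_def by auto

lemma gen_sub: "S \<subseteq> ideal_gen S"
  unfolding ideal_gen_def by auto

lemma gen_least: "is_ideal J \<Longrightarrow> S \<subseteq> J \<Longrightarrow> ideal_gen S \<subseteq> J"
  unfolding ideal_gen_def by auto

lemma prod_mult:
  fixes P :: "nat \<Rightarrow> 'a::comm_ring_1 set"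
  assumes q: "q \<in> ideal_prod k P" and y: "y \<in> P k"
  shows "q * y \<in> ideal_prod (Suc k) P"
proof -
  define T where "T = {q. \<forall>y\<in>P k. q * y \<in> ideal_prod (Suc k) P}"
  have I: "is_ideal (ideal_prod (Suc k) P)" unfolding ideal_prod_def by (rule is_ideal_gen)
  have "is_ideal T" using I unfolding T_def is_ideal_def by (auto simp: distrib_right mult.assoc)
  moreover have "{\<Prod>i<k. p i | p. \<forall>i<k. p i \<in> P i} \<subseteq> T"
  proof
    fix z assume "z \<in> {\<Prod>i<k. p i | p. \<forall>i<k. p i \<in> P i}"
    then obtain p where p: "z = (\<Prod>i<k. p i)" "\<forall>i<k. p i \<in> P i" by blast
    show "z \<in> T" unfolding T_def
    proof (intro CollectI ballI)
      fix y assume y: "y \<in> P k"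
      define p' where "p' = p(k := y)"
      have "(\<Prod>i<Suc k. p' i) = (\<Prod>i<k. p' i) * p' k" by simp
      also have "(\<Prod>i<k. p' i) = (\<Prod>i<k. p i)" unfolding p'_def by (rule prod.cong) auto
      finally have e: "(\<Prod>i<Suc k. p' i) = z * y" using p p'_def by simp
      have A: "\<forall>i<Suc k. p' i \<in> P i" using p y p'_def by (auto simp: less_Suc_eq)
      have "(\<Prod>i<Suc k. p' i) \<in> {\<Prod>i<Suc k. p i | p. \<forall>i<Suc k. p i \<in> P i}"
        by (rule CollectI, rule exI[of _ p'], simp add: A)
      then have "z * y \<in> {\<Prod>i<Suc k. p i | p. \<forall>i<Suc k. p i \<in> P i}" using e by simp
      then show "z * y \<in> ideal_prod (Suc k) P" unfolding ideal_prod_def by (rule subsetD[OF gen_sub])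
    qed
  qed
  ultimately have "ideal_prod k P \<subseteq> T" unfolding ideal_prod_def by (rule gen_least)
  then show ?thesis using q y T_def by blast
qed

lemma prod_sub_P:
  fixes P :: "nat \<Rightarrow> 'a::comm_ring_1 set"
  assumes "is_ideal (P i)" "i < k"
  shows "ideal_prod k P \<subseteq> P i"
  unfolding ideal_prod_def
proof (rule gen_least[OF assms(1)])
  show "{\<Prod>i<k. p i | p. \<forall>i<k. p i \<in> P i} \<subseteq> P i"
  proof
    fix z assume "z \<in> {\<Prod>i<k. p i | p. \<forall>i<k. p i \<in> P i}"
    then obtain p where p: "z = (\<Prod>i<k. p i)" "\<forall>i<k. p i \<in> P i" by blast
    have "z = (\<Prod>j\<in>{..<k}-{i}. p j) * p i" using p(1) prod.remove[of "{..<k}" i p] assms(2) by (simp add: mult.commute)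
    then show "z \<in> P i" using assms p(2) unfolding is_ideal_def by simp
  qed
qed

lemma iprod_zero: "ideal_prod 0 P = (UNIV :: 'a::comm_ring_1 set)"
proof -
  have "(1::'a) \<in> {\<Prod>i<0. p i | p. \<forall>i<0. p i \<in> P i}" by simp
  then have one: "(1::'a) \<in> ideal_prod 0 P" unfolding ideal_prod_def by (rule subsetD[OF gen_sub])
  have id: "is_ideal (ideal_prod 0 P)" unfolding ideal_prod_def by (rule is_ideal_gen)
  then have M: "\<forall>r a. a \<in> ideal_prod 0 P \<longrightarrow> r * a \<in> ideal_prod 0 P" unfolding is_ideal_def by blast
  have "x \<in> ideal_prod 0 P" for x :: 'a using M one by (metis mult.right_neutral)
  then show ?thesis by blast
qed

lemma comax:
  fixes P :: "nat \<Rightarrow> 'a::comm_ring_1 set"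
  assumes "is_ideal (P m)"
  shows "(\<forall>i<k. ideal_sum (P i) (P m) = UNIV) \<Longrightarrow> \<exists>q\<in>ideal_prod k P. \<exists>p\<in>P m. q + p = 1"
proof (induction k)
  case 0
  have z0: "0 \<in> P m" using assms is_ideal_def by blast
  show ?case by (rule bexI[of _ 1], rule bexI[of _ 0]) (simp_all add: iprod_zero z0)
next
  case (Suc k)
  then obtain q p where qp: "q \<in> ideal_prod k P" "p \<in> P m" "q + p = 1" by auto
  have "(1::'a) \<in> ideal_sum (P k) (P m)" using Suc.prems by simp
  then obtain a b where ab: "a \<in> P k" "b \<in> P m" "a + b = 1" unfolding ideal_sum_def mem_Collect_eq by metis
  have e: "1 = q * a + (q * b + (a * p + b * p))"
  proof -
    have "(1::'a) = (q + p) * (a + b)" using qp ab by simp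
    then show ?thesis by (simp add: algebra_simps)
  qed
  have A1: "q * a \<in> ideal_prod (Suc k) P" using prod_mult[OF qp(1) ab(1)] .
  have A2: "q * b + (a * p + b * p) \<in> P m" using assms ab qp unfolding is_ideal_def by simp
  show ?case by (rule bexI[OF _ A1], rule bexI[OF _ A2]) (rule e[symmetric])
qed

lemma prod_eq_Inter:
  fixes P :: "nat \<Rightarrow> 'a::comm_ring_1 set"
  assumes ids: "\<forall>i<n. is_ideal (P i)"
    and cm: "\<forall>i<n. \<forall>j<n. i \<noteq> j \<longrightarrow> ideal_sum (P i) (P j) = UNIV"
  shows "k \<le> n \<Longrightarrow> ideal_prod k P = (\<Inter>i<k. P i)"
proof (induction k)
  case 0
  show ?case unfolding iprod_zero lessThan_0 by simp
next
  case (Suc k)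
  have kn: "k \<le> n" "k < n" using Suc.prems by simp_all
  have IH: "ideal_prod k P = (\<Inter>i<k. P i)" using Suc.IH kn(1) .
  show ?case
  proof
    show "ideal_prod (Suc k) P \<subseteq> (\<Inter>i<Suc k. P i)"
    proof (rule subsetI)
      fix z assume z: "z \<in> ideal_prod (Suc k) P"
      show "z \<in> (\<Inter>i<Suc k. P i)"
      proof (rule INT_I)
        fix i assume i: "i \<in> {..<Suc k}"
        then have "i < n" using Suc.prems by simp
        then have "is_ideal (P i)" using ids by simp
        then have "ideal_prod (Suc k) P \<subseteq> P i" using prod_sub_P i by simp
        then show "z \<in> P i" using z by (rule subsetD)
      qed
    qed
    show "(\<Inter>i<Suc k. P i) \<subseteq> ideal_prod (Suc k) P"
    proof
      fix x assume x: "x \<in> (\<Inter>i<Suc k. P i)"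
      then have "x \<in> (\<Inter>i<k. P i)" by simp
      then have xk: "x \<in> ideal_prod k P" using IH by simp
      have xP: "x \<in> P k" using x by simp
      have cmk: "\<forall>i<k. ideal_sum (P i) (P k) = UNIV" using cm kn(2) by simp
      have idk: "is_ideal (P k)" using ids kn(2) by simp
      obtain q p where qp: "q \<in> ideal_prod k P" "p \<in> P k" "q + p = 1"
        using comax[OF idk cmk] by blast
      have xe: "x = q * x + x * p"
      proof -
        have "x = x * (q + p)" using qp(3) by simp
        then show ?thesis by (simp add: algebra_simps)
      qed
      have a1: "q * x \<in> ideal_prod (Suc k) P" using prod_mult[OF qp(1) xP] .
      have a2: "x * p \<in> ideal_prod (Suc k) P" using prod_mult[OF xk qp(2)] .
      have "is_ideal (ideal_prod (Suc k) P)" unfolding ideal_prod_def by (rule is_ideal_gen)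
      then have "\<forall>a\<in>ideal_prod (Suc k) P. \<forall>b\<in>ideal_prod (Suc k) P. a + b \<in> ideal_prod (Suc k) P"
        unfolding is_ideal_def by blast
      then have "q * x + x * p \<in> ideal_prod (Suc k) P" using a1 a2 by blast
      then show "x \<in> ideal_prod (Suc k) P" using xe by simp
    qed
  qed
qed


theorem mainTheorem11:
  fixes n :: nat
  assumes n_pos: "n > 0"
  shows
   "(\<forall>I :: 'a::comm_ring_1 set. proper_ideal I \<longrightarrow>
       (weakly_n_absorbing n I \<longleftrightarrow>
         (\<forall>m > n. \<forall>x :: nat \<Rightarrow> 'a. (\<Prod>i<m. x i) \<noteq> 0 \<and> (\<Prod>i<m. x i) \<in> I \<longrightarrow>
             (\<exists>J \<subseteq> {..<m}. card J = n \<and> (\<Prod>i\<in>J. x i) \<in> I))))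
  \<and> (\<forall>I :: 'a set. weakly_n_absorbing n I \<longrightarrow> (\<forall>m \<ge> n. weakly_n_absorbing m I))
  \<and> (\<forall>(k::nat) (I :: nat \<Rightarrow> 'a set) (ns :: nat \<Rightarrow> nat).
       k \<ge> 1 \<and> (\<forall>i<k. ns i > 0 \<and> weakly_n_absorbing (ns i) (I i)) \<longrightarrow>
         weakly_n_absorbing (\<Sum>i<k. ns i) (\<Inter>i<k. I i))
  \<and> (\<forall>P :: nat \<Rightarrow> 'a set. (\<forall>i<n. weakly_prime (P i)) \<longrightarrow>
       weakly_n_absorbing n (\<Inter>i<n. P i))
  \<and> (\<forall>P :: nat \<Rightarrow> 'a set. (\<forall>i<n. weakly_prime (P i)) \<and>
       (\<forall>i<n. \<forall>j<n. i \<noteq> j \<longrightarrow> ideal_sum (P i) (P j) = UNIV) \<longrightarrow>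
       weakly_n_absorbing n (ideal_prod n P))"
  proof (intro conjI allI impI)
  fix I :: "'a set" assume "proper_ideal I"
  then show "weakly_n_absorbing n I \<longleftrightarrow>
         (\<forall>m > n. \<forall>x :: nat \<Rightarrow> 'a. (\<Prod>i<m. x i) \<noteq> 0 \<and> (\<Prod>i<m. x i) \<in> I \<longrightarrow>
             (\<exists>J \<subseteq> {..<m}. card J = n \<and> (\<Prod>i\<in>J. x i) \<in> I))" by (rule part1)
next
  fix I :: "'a set" and m assume "weakly_n_absorbing n I" "n \<le> m"
  then show "weakly_n_absorbing m I" by (rule part2)
next
  fix k and I :: "nat \<Rightarrow> 'a set" and ns
  assume "1 \<le> k \<and> (\<forall>i<k. 0 < ns i \<and> weakly_n_absorbing (ns i) (I i))"
  then show "weakly_n_absorbing (\<Sum>i<k. ns i) (\<Inter>i<k. I i)" using part3 by blast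
next
  fix P :: "nat \<Rightarrow> 'a set" assume "\<forall>i<n. weakly_prime (P i)"
  then show "weakly_n_absorbing n (\<Inter>i<n. P i)" using part4 n_pos by blast
next
  fix P :: "nat \<Rightarrow> 'a set"
  assume H: "(\<forall>i<n. weakly_prime (P i)) \<and>
       (\<forall>i<n. \<forall>j<n. i \<noteq> j \<longrightarrow> ideal_sum (P i) (P j) = UNIV)"
  have ids: "\<forall>i<n. is_ideal (P i)" using H unfolding weakly_prime_def proper_ideal_def by blast
  have "ideal_prod n P = (\<Inter>i<n. P i)" using prod_eq_Inter[OF ids] H by blast
  moreover have "weakly_n_absorbing n (\<Inter>i<n. P i)" using part4[OF n_pos] H by blast
  ultimately show "weakly_n_absorbing n (ideal_prod n P)" by simp
qed

end
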